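(* Let $R>r>0$ and let $K^{-1/2}_0$ and $\{\mathbb{E}(t)\}_{t\in[-1/2,1/2]}$ be as in the context. Then $\{\mathbb{E}(t)\}_{t\in[-1/2,1/2]}$ is a resolution of the identity on $K^{-1/2}_0$; namely, $$\langle f,g\rangle_{-1/2}=\int_{-1/2}^{1/2}d\langle f,\mathbb{E}(t)g\rangle_{-1/2}\quad\text{for all } f,g\in K^{-1/2}_0.$$ Moreover, $\lim_{t\to s}\mathbb{E}(t)=\mathbb{E}(s)$ for all $s\in[-1/2,1/2]$ (strongly).
   Context: Identify $\mathbb{R}^2$ with $\mathbb{C}$; for $a\in\mathbb{R}\setminus\{0\}$ let $B_a$ be the open disk of radius $|a|$ centered at $(a,0)$. Fix $R>r>0$, let $\Omega=B_R\setminus\overline{B_r}$, and put $q=\frac1{2r}-\frac1{2R}>0$. For $k\neq0$ let $\mathbb{S}(k)=\frac{1}{2|k|}\mathrm{diag}(1-e^{-|k|q},\,1+e^{-|k|q})$. $K^{-1/2}_0$ is the Hilbert space of pairs $\hat\varphi=(\hat\varphi_1,\hat\varphi_2)^T$ of measurable complex functions on $\mathbb{R}$ (mod a.e.) with $\int_{\mathbb{R}}\hat\varphi^T\mathbb{S}\overline{\hat\varphi}\,dk<\infty$, inner product $\langle\psi,\varphi\rangle_{-1/2}=\int_{\mathbb{R}}\hat\psi^T\mathbb{S}\overline{\hat\varphi}\,dk$ (in the paper such a pair represents a boundary density on $\partial\Omega$ after pulling back by $z\mapsto1/z$, Fourier transforming, and applying $P=\frac1{\sqrt2}\begin{bmatrix}-1&1\\1&1\end{bmatrix}$).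 For $s\in\mathbb{R}\cup\{\infty\}$ let $\mathcal{P}^1(s)(\hat\varphi_1,\hat\varphi_2)=(\chi_{(-\infty,s]}\hat\varphi_1,0)$, $\mathcal{P}^2(s)(\hat\varphi_1,\hat\varphi_2)=(0,\chi_{(-\infty,s]}\hat\varphi_2)$ (with $\chi_{(-\infty,\infty]}\equiv1$), $\mathbb{I}=\mathcal{P}^1(\infty)+\mathcal{P}^2(\infty)$, and $$\mathbb{E}(t)=\begin{cases}\mathcal{P}^1\!\left(-\frac{\ln(-2t)}{q}\right)-\mathcal{P}^1\!\left(\frac{\ln(-2t)}{q}\right),& t\in[-1/2,0),\\[2pt]\mathcal{P}^2\!\left(\frac{\ln(2t)}{q}\right)-\mathcal{P}^2\!\left(-\frac{\ln(2t)}{q}\right)+\mathbb{I},& t\in(0,1/2],\end{cases}\qquad \mathbb{E}(0)=\lim_{t\to0^+}\mathbb{E}(t).$$ A resolution of the identity means: each $\mathbb{E}(t)$ is an orthogonal projection, $\mathbb{E}(t)\mathbb{E}(s)=\mathbb{E}(\min(t,s))$, $\mathbb{E}$ is right-continuous, $\mathbb{E}(-1/2)=0$, $\mathbb{E}(1/2)=\mathbb{I}$. *)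

theory Defs
  imports "HOL-Analysis.Analysis" "HOL-Library.Extended_Real"
begin

text \<open>Elements of K^{-1/2}_0 are represented by pairs of functions
  (phi1, phi2) : real -> complex; equality is up to Lebesgue-a.e. equality.\<close>

type_synonym kpair = "(real \<Rightarrow> complex) \<times> (real \<Rightarrow> complex)"

definition S1 :: "real \<Rightarrow> real \<Rightarrow> real" where
  "S1 q k = (1 - exp (- \<bar>k\<bar> * q)) / (2 * \<bar>k\<bar>)"

definition S2 :: "real \<Rightarrow> real \<Rightarrow> real" where
  "S2 q k = (1 + exp (- \<bar>k\<bar> * q)) / (2 * \<bar>k\<bar>)"

definition inK :: "real \<Rightarrow> kpair \<Rightarrow> bool" where
  "inK q \<phi> \<longleftrightarrow> fst \<phi> \<in> borel_measurable lborel \<and> snd \<phi> \<in> borel_measurable lborel \<and>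
     integrable lborel (\<lambda>k. S1 q k * (cmod (fst \<phi> k))\<^sup>2 + S2 q k * (cmod (snd \<phi> k))\<^sup>2)"

definition kinner :: "real \<Rightarrow> kpair \<Rightarrow> kpair \<Rightarrow> complex" where
  "kinner q \<psi> \<phi> = (LINT k|lborel. complex_of_real (S1 q k) * fst \<psi> k * cnj (fst \<phi> k)
                               + complex_of_real (S2 q k) * snd \<psi> k * cnj (snd \<phi> k))"

definition knorm :: "real \<Rightarrow> kpair \<Rightarrow> real" where
  "knorm q \<phi> = sqrt (Re (kinner q \<phi> \<phi>))"

definition keq :: "kpair \<Rightarrow> kpair \<Rightarrow> bool" where
  "keq \<phi> \<psi> \<longleftrightarrow> (AE k in lborel. fst \<phi> k = fst \<psi> k \<and> snd \<phi> k = snd \<psi> k)"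

definition kminus :: "kpair \<Rightarrow> kpair \<Rightarrow> kpair" where
  "kminus \<phi> \<psi> = ((\<lambda>k. fst \<phi> k - fst \<psi> k), (\<lambda>k. snd \<phi> k - snd \<psi> k))"

definition kplus :: "kpair \<Rightarrow> kpair \<Rightarrow> kpair" where
  "kplus \<phi> \<psi> = ((\<lambda>k. fst \<phi> k + fst \<psi> k), (\<lambda>k. snd \<phi> k + snd \<psi> k))"

definition kzero :: kpair where
  "kzero = ((\<lambda>k. 0), (\<lambda>k. 0))"

text \<open>P^1(s), P^2(s) for s in real \<union> {\<infinity>} (as an ereal; chi_{(-\<infinity>,\<infinity>]} = 1).\<close>
definition P1 :: "ereal \<Rightarrow> kpair \<Rightarrow> kpair" where
  "P1 s \<phi> = ((\<lambda>k. if ereal k \<le> s then fst \<phi> k else 0), (\<lambda>k. 0))"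

definition P2 :: "ereal \<Rightarrow> kpair \<Rightarrow> kpair" where
  "P2 s \<phi> = ((\<lambda>k. 0), (\<lambda>k. if ereal k \<le> s then snd \<phi> k else 0))"

definition Iop :: "kpair \<Rightarrow> kpair" where
  "Iop \<phi> = kplus (P1 \<infinity> \<phi>) (P2 \<infinity> \<phi>)"

text \<open>The family E(t); E(0) is the (pointwise, hence strong) limit t -> 0+, namely P^1(\<infinity>).\<close>
definition Eop :: "real \<Rightarrow> real \<Rightarrow> kpair \<Rightarrow> kpair" where
  "Eop q t \<phi> =
     (if t < 0 then kminus (P1 (ereal (- ln (-2*t) / q)) \<phi>) (P1 (ereal (ln (-2*t) / q)) \<phi>)
      else if t = 0 then P1 \<infinity> \<phi>
      else kplus (kminus (P2 (ereal (ln (2*t) / q)) \<phi>) (P2 (ereal (- ln (2*t) / q)) \<phi>)) (Iop \<phi>))"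

definition is_orth_proj :: "real \<Rightarrow> (kpair \<Rightarrow> kpair) \<Rightarrow> bool" where
  "is_orth_proj q P \<longleftrightarrow>
     (\<forall>\<phi>. inK q \<phi> \<longrightarrow> inK q (P \<phi>) \<and> keq (P (P \<phi>)) (P \<phi>)) \<and>
     (\<forall>\<phi> \<psi>. inK q \<phi> \<and> inK q \<psi> \<and> keq \<phi> \<psi> \<longrightarrow> keq (P \<phi>) (P \<psi>)) \<and>
     (\<forall>\<phi> \<psi>. inK q \<phi> \<and> inK q \<psi> \<longrightarrow> kinner q (P \<phi>) \<psi> = kinner q \<phi> (P \<psi>))"

end

theory Submission
  imports Defs
begin

definition Aq :: "real \<Rightarrow> real \<Rightarrow> real" where
  "Aq q t = (if t < 0 then - ln (-2*t) / q else - ln (2*t) / q)"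

definition in1 :: "real \<Rightarrow> real \<Rightarrow> real \<Rightarrow> bool" where
  "in1 q t k \<longleftrightarrow> (t < 0 \<longrightarrow> (- Aq q t < k \<and> k \<le> Aq q t))"

definition in2 :: "real \<Rightarrow> real \<Rightarrow> real \<Rightarrow> bool" where
  "in2 q t k \<longleftrightarrow> (0 < t \<and> \<not> (- Aq q t < k \<and> k \<le> Aq q t))"

lemma Aq_nonneg:
  assumes "q > 0" "t \<in> {-1/2..1/2}" "t \<noteq> 0"
  shows "Aq q t \<ge> 0"
proof (cases "t < 0")
  case True
  then have "ln (-2*t) \<le> 0" using assms by (subst ln_le_zero_iff) auto
  then show ?thesis using True assms by (simp add: Aq_def divide_nonpos_pos)
next
  case False
  then have "ln (2*t) \<le> 0" using assms by (subst ln_le_zero_iff) auto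
  then show ?thesis using False assms by (simp add: Aq_def divide_nonpos_pos)
qed

lemma Eop_fst:
  assumes "q > 0" "t \<in> {-1/2..1/2}"
  shows "fst (Eop q t \<phi>) k = (if in1 q t k then fst \<phi> k else 0)"
proof -
  consider "t < 0" | "t = 0" | "t > 0" by linarith
  then show ?thesis
  proof cases
    case 1
    then have A: "Aq q t \<ge> 0" using Aq_nonneg assms by auto
    have e: "ln (-2*t) / q = - Aq q t" using 1 by (simp add: Aq_def)
    have e2: "- ln (-2*t) / q = Aq q t" using 1 by (simp add: Aq_def)
    show ?thesis using 1 A unfolding Eop_def e e2
      by (auto simp: kminus_def P1_def in1_def)
  next
    case 2 then show ?thesis by (simp add: Eop_def P1_def in1_def)
  next
    case 3 then show ?thesis by (simp add: Eop_def P1_def P2_def in1_def kplus_def kminus_def Iop_def)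
  qed
qed

lemma Eop_snd:
  assumes "q > 0" "t \<in> {-1/2..1/2}"
  shows "snd (Eop q t \<phi>) k = (if in2 q t k then snd \<phi> k else 0)"
proof -
  consider "t < 0" | "t = 0" | "t > 0" by linarith
  then show ?thesis
  proof cases
    case 1
    show ?thesis using 1 unfolding Eop_def
      by (auto simp: kminus_def P1_def in2_def)
  next
    case 2 then show ?thesis by (simp add: Eop_def P1_def in2_def)
  next
    case 3
    then have A: "Aq q t \<ge> 0" using Aq_nonneg assms by auto
    have e: "ln (2*t) / q = - Aq q t" using 3 by (simp add: Aq_def)
    have e2: "- ln (2*t) / q = Aq q t" using 3 by (simp add: Aq_def)
    show ?thesis using 3 A unfolding Eop_def e e2
      by (auto simp: P1_def P2_def in2_def kplus_def kminus_def Iop_def)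
  qed
qed

lemma Aq_mono_neg: "q > 0 \<Longrightarrow> t \<le> s \<Longrightarrow> s < 0 \<Longrightarrow> Aq q t \<le> Aq q s"
  by (auto simp: Aq_def divide_right_mono)

lemma Aq_mono_pos: "q > 0 \<Longrightarrow> t \<le> s \<Longrightarrow> 0 < t \<Longrightarrow> Aq q s \<le> Aq q t"
  by (auto simp: Aq_def divide_right_mono)


lemma in1_min:
  assumes "q > 0" "t \<in> {-1/2..1/2}" "s \<in> {-1/2..1/2}"
  shows "(in1 q t k \<and> in1 q s k) \<longleftrightarrow> in1 q (min t s) k"
proof (cases "t \<le> s")
  case True
  then show ?thesis using Aq_mono_neg[OF assms(1) True]
    by (auto simp: in1_def min_def)
next
  case False
  then have st: "s \<le> t" by simp
  then show ?thesis using Aq_mono_neg[OF assms(1) st] False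
    by (auto simp: in1_def min_def)
qed

lemma in2_min:
  assumes "q > 0" "t \<in> {-1/2..1/2}" "s \<in> {-1/2..1/2}"
  shows "(in2 q t k \<and> in2 q s k) \<longleftrightarrow> in2 q (min t s) k"
proof (cases "t \<le> s")
  case True
  then show ?thesis using Aq_mono_pos[OF assms(1) True]
    by (auto simp: in2_def min_def)
next
  case False
  then have st: "s \<le> t" by simp
  then show ?thesis using Aq_mono_pos[OF assms(1) st] False
    by (auto simp: in2_def min_def)
qed

lemma ev_strict:
  fixes a :: "real \<Rightarrow> real"
  assumes "(a \<longlongrightarrow> l) F" "k \<noteq> l" "k \<noteq> - l"
  shows "eventually (\<lambda>t. (- a t < k \<and> k \<le> a t) \<longleftrightarrow> (- l < k \<and> k \<le> l)) F"
proof -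
  have m: "((\<lambda>t. - a t) \<longlongrightarrow> - l) F" using assms(1) by (intro tendsto_intros)
  have e1: "eventually (\<lambda>t. (- a t < k) \<longleftrightarrow> (- l < k)) F"
  proof (cases "- l < k")
    case True then show ?thesis using order_tendstoD(2)[OF m True] by (auto elim: eventually_mono)
  next
    case False then have "k < - l" using assms by auto
    then show ?thesis using order_tendstoD(1)[OF m \<open>k < - l\<close>] False by (auto elim: eventually_mono)
  qed
  have e2: "eventually (\<lambda>t. (k \<le> a t) \<longleftrightarrow> (k \<le> l)) F"
  proof (cases "k < l")
    case True then show ?thesis using order_tendstoD(1)[OF assms(1) True] by (auto elim: eventually_mono)
  next
    case False then have "l < k" using assms by auto
    then show ?thesis using order_tendstoD(2)[OF assms(1) \<open>l < k\<close>] False by (auto elim: eventually_mono)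
  qed
  show ?thesis using eventually_conj[OF e1 e2] by (auto elim: eventually_mono)
qed

lemma ev_in:
  assumes q: "q > 0" and s: "s \<in> {-1/2..1/2}" and k: "k \<noteq> Aq q s" "k \<noteq> - Aq q s"
  shows "eventually (\<lambda>t. (in1 q t k \<longleftrightarrow> in1 q s k) \<and> (in2 q t k \<longleftrightarrow> in2 q s k)) (at s within {-1/2..1/2})"
proof -
  have id: "((\<lambda>t. t) \<longlongrightarrow> s) (at s within {-1/2..1/2})" by (rule tendsto_ident_at)
  consider "s < 0" | "s = 0" | "s > 0" by linarith
  then show ?thesis
  proof cases
    case 1
    have neg: "eventually (\<lambda>t. t < 0) (at s within {-1/2..1/2})"
      using order_tendstoD(2)[OF id 1] .
    have lim: "((\<lambda>t. - ln (-2*t) / q) \<longlongrightarrow> Aq q s) (at s within {-1/2..1/2})"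
      using 1 q unfolding Aq_def by (auto intro!: tendsto_intros)
    have "eventually (\<lambda>t. (- (- ln (-2*t) / q) < k \<and> k \<le> - ln (-2*t) / q) \<longleftrightarrow> (- Aq q s < k \<and> k \<le> Aq q s)) (at s within {-1/2..1/2})"
      by (rule ev_strict[OF lim k])
    then show ?thesis using neg
      by eventually_elim (use 1 in \<open>auto simp: in1_def in2_def Aq_def\<close>)
  next
    case 3
    have pos: "eventually (\<lambda>t. t > 0) (at s within {-1/2..1/2})"
      using order_tendstoD(1)[OF id 3] .
    have lim: "((\<lambda>t. - ln (2*t) / q) \<longlongrightarrow> Aq q s) (at s within {-1/2..1/2})"
      using 3 q unfolding Aq_def by (auto intro!: tendsto_intros)
    have "eventually (\<lambda>t. (- (- ln (2*t) / q) < k \<and> k \<le> - ln (2*t) / q) \<longleftrightarrow> (- Aq q s < k \<and> k \<le> Aq q s)) (at s within {-1/2..1/2})"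
      by (rule ev_strict[OF lim k])
    then show ?thesis using pos
      by eventually_elim (use 3 in \<open>auto simp: in1_def in2_def Aq_def\<close>)
  next
    case 2
    define d where "d = exp (- (\<bar>k\<bar> + 1) * q) / 2"
    have d: "d > 0" unfolding d_def by simp
    have "eventually (\<lambda>t. \<bar>k\<bar> < Aq q t) (at s within {-1/2..1/2})"
      unfolding eventually_at
    proof (intro exI[of _ d] conjI d ballI impI)
      fix t assume "t \<in> {-1/2..1/2}" "t \<noteq> s \<and> dist t s < d"
      then have t0: "t \<noteq> 0" and tl: "\<bar>t\<bar> < d" using 2 by (auto simp: dist_real_def)
      have "2 * \<bar>t\<bar> < exp (- (\<bar>k\<bar> + 1) * q)" using tl unfolding d_def by simp
      moreover have "0 < 2 * \<bar>t\<bar>" using t0 by simp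
      ultimately have "ln (2 * \<bar>t\<bar>) < ln (exp (- (\<bar>k\<bar> + 1) * q))"
        by (subst ln_less_cancel_iff) auto
      then have "ln (2 * \<bar>t\<bar>) < - (\<bar>k\<bar> + 1) * q" by simp
      then have "- ln (2 * \<bar>t\<bar>) / q > \<bar>k\<bar> + 1" using q
        by (simp add: field_simps)
      moreover have "Aq q t = - ln (2 * \<bar>t\<bar>) / q" using t0 by (auto simp: Aq_def)
      ultimately show "\<bar>k\<bar> < Aq q t" by simp
    qed
    then show ?thesis
      by eventually_elim (use 2 in \<open>auto simp: in1_def in2_def\<close>)
  qed
qed


definition W :: "real \<Rightarrow> kpair \<Rightarrow> real \<Rightarrow> real" where
  "W q \<phi> k = S1 q k * (cmod (fst \<phi> k))\<^sup>2 + S2 q k * (cmod (snd \<phi> k))\<^sup>2"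

lemma S1_nonneg: "q > 0 \<Longrightarrow> S1 q k \<ge> 0"
  by (auto simp: S1_def intro!: divide_nonneg_nonneg)

lemma S2_nonneg: "q > 0 \<Longrightarrow> S2 q k \<ge> 0"
  by (auto simp: S2_def intro!: divide_nonneg_nonneg add_nonneg_nonneg)

lemma S1_meas[measurable]: "S1 q \<in> borel_measurable borel"
  unfolding S1_def by measurable

lemma S2_meas[measurable]: "S2 q \<in> borel_measurable borel"
  unfolding S2_def by measurable

lemma in1_pred[measurable]: "Measurable.pred borel (in1 q t)"
  unfolding in1_def by measurable

lemma in2_pred[measurable]: "Measurable.pred borel (in2 q t)"
  unfolding in2_def by measurable

lemma Eop_fst_fun:
  "q > 0 \<Longrightarrow> t \<in> {-1/2..1/2} \<Longrightarrow> fst (Eop q t \<phi>) = (\<lambda>k. if in1 q t k then fst \<phi> k else 0)"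
  by (intro ext Eop_fst)

lemma Eop_snd_fun:
  "q > 0 \<Longrightarrow> t \<in> {-1/2..1/2} \<Longrightarrow> snd (Eop q t \<phi>) = (\<lambda>k. if in2 q t k then snd \<phi> k else 0)"
  by (intro ext Eop_snd)

lemma kinner_self_re: "Re (kinner q \<phi> \<phi>) = (LINT k|lborel. W q \<phi> k)"
proof -
  have "kinner q \<phi> \<phi> = (LINT k|lborel. complex_of_real (W q \<phi> k))"
    unfolding kinner_def W_def
    by (intro Bochner_Integration.integral_cong refl)
       (simp add: mult.assoc complex_norm_square[symmetric])
  then show ?thesis by simp
qed

lemma W_meas[measurable]:
  "fst \<phi> \<in> borel_measurable borel \<Longrightarrow> snd \<phi> \<in> borel_measurable borel \<Longrightarrow> W q \<phi> \<in> borel_measurable borel"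
  unfolding W_def by (intro borel_measurable_add borel_measurable_times borel_measurable_power borel_measurable_norm S1_meas S2_meas) auto

lemma inK_Eop:
  assumes q: "q > 0" and t: "t \<in> {-1/2..1/2}" and K: "inK q \<phi>"
  shows "inK q (Eop q t \<phi>)"
proof -
  have m1: "fst \<phi> \<in> borel_measurable borel" and m2: "snd \<phi> \<in> borel_measurable borel"
    and I: "integrable lborel (W q \<phi>)"
    using K unfolding inK_def W_def by auto
  have f1: "fst (Eop q t \<phi>) \<in> borel_measurable borel"
    unfolding Eop_fst_fun[OF q t] using m1 by measurable
  have f2: "snd (Eop q t \<phi>) \<in> borel_measurable borel"
    unfolding Eop_snd_fun[OF q t] using m2 by measurable
  have "integrable lborel (W q (Eop q t \<phi>))"
  proof (rule Bochner_Integration.integrable_bound[OF I])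
    show "W q (Eop q t \<phi>) \<in> borel_measurable lborel" using f1 f2 by simp
    show "AE k in lborel. norm (W q (Eop q t \<phi>) k) \<le> norm (W q \<phi> k)"
      using S1_nonneg[OF q] S2_nonneg[OF q]
      by (intro AE_I2) (auto simp: W_def Eop_fst[OF q t] Eop_snd[OF q t])
  qed
  then show ?thesis using f1 f2 unfolding inK_def W_def by simp
qed


lemma W_D:
  assumes q: "q > 0" and t: "t \<in> {-1/2..1/2}" and s: "s \<in> {-1/2..1/2}"
  shows "W q (kminus (Eop q t \<phi>) (Eop q s \<phi>)) k =
    S1 q k * (if in1 q t k = in1 q s k then 0 else (cmod (fst \<phi> k))\<^sup>2) +
    S2 q k * (if in2 q t k = in2 q s k then 0 else (cmod (snd \<phi> k))\<^sup>2)"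
  by (simp add: W_def kminus_def Eop_fst[OF q t] Eop_snd[OF q t] Eop_fst[OF q s] Eop_snd[OF q s])

lemma Eop_cont:
  assumes q: "q > 0" and s: "s \<in> {-1/2..1/2}" and K: "inK q \<phi>"
  shows "((\<lambda>t. knorm q (kminus (Eop q t \<phi>) (Eop q s \<phi>))) \<longlongrightarrow> 0) (at s within {-1/2..1/2})"
proof -
  define S :: "real set" where "S = {-1/2..1/2}"
  have m1: "fst \<phi> \<in> borel_measurable borel" and m2: "snd \<phi> \<in> borel_measurable borel"
    and I: "integrable lborel (W q \<phi>)"
    using K unfolding inK_def W_def by auto
  let ?G = "\<lambda>t. LINT k|lborel. W q (kminus (Eop q t \<phi>) (Eop q s \<phi>)) k"
  have G: "(?G \<longlongrightarrow> 0) (at s within S)"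
    unfolding tendsto_at_iff_sequentially comp_def
  proof (intro allI impI)
    fix X :: "nat \<Rightarrow> real"
    assume XS: "\<forall>i. X i \<in> S - {s}" and Xl: "X \<longlonglongrightarrow> s"
    have XS': "X i \<in> {-1/2..1/2}" for i using XS unfolding S_def by auto
    have fl: "filterlim X (at s within S) sequentially"
      using XS Xl by (auto simp: filterlim_at)
    have "(\<lambda>i. integral\<^sup>L lborel (W q (kminus (Eop q (X i) \<phi>) (Eop q s \<phi>)))) \<longlonglongrightarrow> integral\<^sup>L lborel (\<lambda>k::real. 0::real)"
    proof (rule integral_dominated_convergence[where w="W q \<phi>"])
      show "(\<lambda>k::real. 0::real) \<in> borel_measurable lborel" by simp
      show "integrable lborel (W q \<phi>)" by (rule I)
      fix i
      have e: "W q (kminus (Eop q (X i) \<phi>) (Eop q s \<phi>)) = (\<lambda>k.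
        S1 q k * (if in1 q (X i) k = in1 q s k then 0 else (cmod (fst \<phi> k))\<^sup>2) +
        S2 q k * (if in2 q (X i) k = in2 q s k then 0 else (cmod (snd \<phi> k))\<^sup>2))"
        by (intro ext W_D[OF q XS'[of i] s])
      show "W q (kminus (Eop q (X i) \<phi>) (Eop q s \<phi>)) \<in> borel_measurable lborel"
        unfolding e using m1 m2 by measurable
      show "AE k in lborel. norm (W q (kminus (Eop q (X i) \<phi>) (Eop q s \<phi>)) k) \<le> W q \<phi> k"
        using S1_nonneg[OF q] S2_nonneg[OF q]
        by (intro AE_I2) (auto simp: e W_def)
    next
      have "AE k in lborel. k \<noteq> Aq q s" by (rule AE_lborel_singleton)
      moreover have "AE k in lborel. k \<noteq> - Aq q s" by (rule AE_lborel_singleton)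
      ultimately show "AE k in lborel. (\<lambda>i. W q (kminus (Eop q (X i) \<phi>) (Eop q s \<phi>)) k) \<longlonglongrightarrow> 0"
      proof eventually_elim
        case (elim k)
        have ev: "eventually (\<lambda>t. (in1 q t k \<longleftrightarrow> in1 q s k) \<and> (in2 q t k \<longleftrightarrow> in2 q s k)) (at s within S)"
          unfolding S_def using ev_in[OF q s elim(1) elim(2)] .
        have "eventually (\<lambda>i. (in1 q (X i) k \<longleftrightarrow> in1 q s k) \<and> (in2 q (X i) k \<longleftrightarrow> in2 q s k)) sequentially"
          using filterlim_iff[THEN iffD1, OF fl, rule_format, OF ev] .
        then have "eventually (\<lambda>i. W q (kminus (Eop q (X i) \<phi>) (Eop q s \<phi>)) k = 0) sequentially"
          by (rule eventually_mono) (simp add: W_D[OF q XS' s])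
        then show ?case by (rule tendsto_eventually)
      qed
    qed
    then show "(\<lambda>i. integral\<^sup>L lborel (W q (kminus (Eop q (X i) \<phi>) (Eop q s \<phi>)))) \<longlonglongrightarrow> 0"
      by simp
  qed
  have "((\<lambda>t. sqrt (?G t)) \<longlongrightarrow> sqrt 0) (at s within S)"
    by (rule tendsto_real_sqrt[OF G])
  then show ?thesis unfolding S_def knorm_def kinner_self_re by simp
qed


lemma Aq_half: "Aq q (-1/2) = 0" "Aq q (1/2) = 0" "Aq q (-(1/2)) = 0"
  by (simp_all add: Aq_def)

lemma in_half: "\<not> in1 q (-1/2) k" "\<not> in2 q (-1/2) k" "in1 q (1/2) k" "in2 q (1/2) k"
  "\<not> in1 q (-(1/2)) k" "\<not> in2 q (-(1/2)) k"
  by (auto simp: in1_def in2_def Aq_half)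

theorem proposition3p4:
  fixes r R :: real
  assumes "0 < r" and "r < R"
  defines "q \<equiv> 1 / (2 * r) - 1 / (2 * R)"
  shows
    "(\<forall>t\<in>{-1/2..1/2}. is_orth_proj q (Eop q t))
   \<and> (\<forall>t\<in>{-1/2..1/2}. \<forall>s\<in>{-1/2..1/2}. \<forall>\<phi>. inK q \<phi> \<longrightarrow>
        keq (Eop q t (Eop q s \<phi>)) (Eop q (min t s) \<phi>))
   \<and> (\<forall>\<phi>. inK q \<phi> \<longrightarrow> keq (Eop q (-1/2) \<phi>) kzero)
   \<and> (\<forall>\<phi>. inK q \<phi> \<longrightarrow> keq (Eop q (1/2) \<phi>) (Iop \<phi>))
   \<and> (\<forall>f g. inK q f \<and> inK q g \<longrightarrow>
        kinner q f g = kinner q f (Eop q (1/2) g) - kinner q f (Eop q (-1/2) g))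
   \<and> (\<forall>s\<in>{-1/2..1/2}. \<forall>\<phi>. inK q \<phi> \<longrightarrow>
        ((\<lambda>t. knorm q (kminus (Eop q t \<phi>) (Eop q s \<phi>))) \<longlongrightarrow> 0) (at s within {-1/2..1/2}))"
proof -
  have q: "q > 0" unfolding q_def using assms(1,2)
    by (simp add: field_simps)
  have h: "(-1/2::real) \<in> {-1/2..1/2}" "(1/2::real) \<in> {-1/2..1/2}" "(-(1/2)::real) \<in> {-1/2..1/2}" by auto
  have P1: "\<forall>t\<in>{-1/2..1/2}. is_orth_proj q (Eop q t)"
  proof
    fix t :: real assume t: "t \<in> {-1/2..1/2}"
    show "is_orth_proj q (Eop q t)"
      unfolding is_orth_proj_def
    proof (intro conjI allI impI)
      fix \<phi> assume "inK q \<phi>"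
      then show "inK q (Eop q t \<phi>)" using inK_Eop[OF q t] by auto
      show "keq (Eop q t (Eop q t \<phi>)) (Eop q t \<phi>)"
        unfolding keq_def by (intro AE_I2) (simp add: Eop_fst[OF q t] Eop_snd[OF q t])
    next
      fix \<phi> \<psi> assume "inK q \<phi> \<and> inK q \<psi> \<and> keq \<phi> \<psi>"
      then have "keq \<phi> \<psi>" by simp
      then show "keq (Eop q t \<phi>) (Eop q t \<psi>)"
        unfolding keq_def by (rule eventually_mono) (simp add: Eop_fst[OF q t] Eop_snd[OF q t])
    next
      fix \<phi> \<psi> :: kpair
      show "kinner q (Eop q t \<phi>) \<psi> = kinner q \<phi> (Eop q t \<psi>)"
        unfolding kinner_def
        by (intro Bochner_Integration.integral_cong refl) (simp add: Eop_fst[OF q t] Eop_snd[OF q t])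
    qed
  qed
  have P2: "\<forall>t\<in>{-1/2..1/2}. \<forall>s\<in>{-1/2..1/2}. \<forall>\<phi>. inK q \<phi> \<longrightarrow>
        keq (Eop q t (Eop q s \<phi>)) (Eop q (min t s) \<phi>)"
  proof (intro ballI allI impI)
    fix t s :: real and \<phi> :: kpair
    assume t: "t \<in> {-1/2..1/2}" and s: "s \<in> {-1/2..1/2}"
    have m: "min t s \<in> {-1/2..1/2}" using t s by auto
    show "keq (Eop q t (Eop q s \<phi>)) (Eop q (min t s) \<phi>)"
      unfolding keq_def
      by (intro AE_I2) (auto simp: Eop_fst[OF q t] Eop_snd[OF q t] Eop_fst[OF q s] Eop_snd[OF q s]
          Eop_fst[OF q m] Eop_snd[OF q m] in1_min[OF q t s, symmetric] in2_min[OF q t s, symmetric])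
  qed
  have P3: "\<forall>\<phi>. inK q \<phi> \<longrightarrow> keq (Eop q (-1/2) \<phi>) kzero"
    unfolding keq_def kzero_def
    by (intro allI impI AE_I2) (simp add: Eop_fst[OF q h(3)] Eop_snd[OF q h(3)] in_half)
  have P4: "\<forall>\<phi>. inK q \<phi> \<longrightarrow> keq (Eop q (1/2) \<phi>) (Iop \<phi>)"
    unfolding keq_def
    by (intro allI impI AE_I2) (simp add: Eop_fst[OF q h(2)] Eop_snd[OF q h(2)] in_half
        Iop_def kplus_def P1_def P2_def)
  have P5: "\<forall>f g. inK q f \<and> inK q g \<longrightarrow>
        kinner q f g = kinner q f (Eop q (1/2) g) - kinner q f (Eop q (-1/2) g)"
  proof (intro allI impI)
    fix f g :: kpair
    have a: "kinner q f (Eop q (1/2) g) = kinner q f g"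
      unfolding kinner_def
      by (intro Bochner_Integration.integral_cong refl) (simp add: Eop_fst[OF q h(2)] Eop_snd[OF q h(2)] in_half)
    have b: "kinner q f (Eop q (-1/2) g) = 0"
      unfolding kinner_def
      by (simp add: Eop_fst[OF q h(3)] Eop_snd[OF q h(3)] in_half)
    show "kinner q f g = kinner q f (Eop q (1/2) g) - kinner q f (Eop q (-1/2) g)"
      using a b by simp
  qed
  have P6: "\<forall>s\<in>{-1/2..1/2}. \<forall>\<phi>. inK q \<phi> \<longrightarrow>
        ((\<lambda>t. knorm q (kminus (Eop q t \<phi>) (Eop q s \<phi>))) \<longlongrightarrow> 0) (at s within {-1/2..1/2})"
    using Eop_cont[OF q] by blast
  show ?thesis using P1 P2 P3 P4 P5 P6 by blast
qed

end
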